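(* Let $N\ge2$, let $\mathcal I$ be a countable set, let $\Sigma=\mathcal I^{\mathbb N}$ with shift $\sigma$, and let $\nu$ be a $\sigma$-invariant ergodic probability measure on $\Sigma$. Let $\mathcal B=\{\mathbf B_i\}_{i\in\mathcal I}$ be a family of nonnegative allowable $N\times N$ matrices which is good with respect to $\nu$. Then the limits $\lambda=\lim_{n\to\infty}\frac1n\log\|\mathbf B_{\overline{\boldsymbol\theta}|_n}\|$ and $\lambda_*=\lim_{n\to\infty}\frac1n\log(\mathbf B_{\overline{\boldsymbol\theta}|_n})_*$ exist and are constant for $\nu$-a.e. $\overline{\boldsymbol\theta}$, and $\lambda=\lambda_*$.
   Context: A nonnegative square matrix is allowable if each row and each column contains a strictly positive entry. For a nonnegative $N\times N$ matrix $\mathbf B$: $\|\mathbf B\|$ is the sum of all entries, $\|\mathbf B\|_1=\max_j\sum_i\mathbf B_{i,j}$ (maximal column sum), $(\mathbf B)_*=\min_j\sum_i\mathbf B_{i,j}$ (minimal column sum). For $\overline{\boldsymbol\theta}=(\theta_1,\theta_2,\dots)\in\Sigma$, $\overline{\boldsymbol\theta}|_n=(\theta_1,\dots,\theta_n)$ and $\mathbf B_{(\theta_1,\dots,\theta_n)}=\mathbf B_{\theta_1}\cdots\mathbf B_{\theta_n}$. The family $\mathcal B$ is good with respect to $\nu$ if (1) $\int|\log\|\mathbf B_{\theta_1}\|_1|\,d\nu(\overline{\boldsymbol\theta})+\int|\log(\mathbf B_{\theta_1})_*|\,d\nu(\overline{\boldsymbol\theta})<\infty$, and (2) there is a finite word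 $\boldsymbol\theta=(\theta_1,\dots,\theta_n)\in\mathcal I^n$ with $\nu(\{\overline{\boldsymbol\theta}:\overline{\boldsymbol\theta}|_n=\boldsymbol\theta\})>0$ such that every entry of $\mathbf B_{\boldsymbol\theta}$ is strictly positive. *)

theory Defs
  imports "HOL-Probability.Probability"
begin

definition shift :: "(nat \<Rightarrow> 'i) \<Rightarrow> (nat \<Rightarrow> 'i)" where
  "shift \<theta> = (\<lambda>k. \<theta> (Suc k))"

definition seq_space :: "(nat \<Rightarrow> 'i) measure" where
  "seq_space = Pi\<^sub>M UNIV (\<lambda>_. count_space UNIV)"

definition shift_invariant :: "(nat \<Rightarrow> 'i) measure \<Rightarrow> bool" where
  "shift_invariant \<nu> \<longleftrightarrow> shift \<in> measurable \<nu> \<nu> \<and>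
     (\<forall>A\<in>sets \<nu>. emeasure \<nu> (shift -` A \<inter> space \<nu>) = emeasure \<nu> A)"

definition shift_ergodic :: "(nat \<Rightarrow> 'i) measure \<Rightarrow> bool" where
  "shift_ergodic \<nu> \<longleftrightarrow>
     (\<forall>A\<in>sets \<nu>. shift -` A \<inter> space \<nu> = A \<longrightarrow> measure \<nu> A = 0 \<or> measure \<nu> A = 1)"

definition nonneg_mat :: "real^'n^'n \<Rightarrow> bool" where
  "nonneg_mat B \<longleftrightarrow> (\<forall>i j. B $ i $ j \<ge> 0)"

definition allowable :: "real^'n^'n \<Rightarrow> bool" where
  "allowable B \<longleftrightarrow> nonneg_mat B \<and> (\<forall>i. \<exists>j. B $ i $ j > 0) \<and> (\<forall>j. \<exists>i. B $ i $ j > 0)"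

definition entry_sum :: "real^'n::finite^'n \<Rightarrow> real" where
  "entry_sum B = (\<Sum>i\<in>UNIV. \<Sum>j\<in>UNIV. B $ i $ j)"

definition max_col_sum :: "real^'n::finite^'n \<Rightarrow> real" where
  "max_col_sum B = Max (range (\<lambda>j. \<Sum>i\<in>UNIV. B $ i $ j))"

definition min_col_sum :: "real^'n::finite^'n \<Rightarrow> real" where
  "min_col_sum B = Min (range (\<lambda>j. \<Sum>i\<in>UNIV. B $ i $ j))"

text \<open>B_{(theta_1..theta_n)} = B_{theta_1} ... B_{theta_n}; here indices start at 0.\<close>
primrec word_prod :: "('i \<Rightarrow> real^'n::finite^'n) \<Rightarrow> (nat \<Rightarrow> 'i) \<Rightarrow> nat \<Rightarrow> real^'n^'n" where
  "word_prod B \<theta> 0 = mat 1"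
| "word_prod B \<theta> (Suc n) = word_prod B \<theta> n ** B (\<theta> n)"

definition good_family :: "('i \<Rightarrow> real^'n::finite^'n) \<Rightarrow> (nat \<Rightarrow> 'i) measure \<Rightarrow> bool" where
  "good_family B \<nu> \<longleftrightarrow>
     (\<integral>\<^sup>+ \<theta>. ennreal \<bar>ln (max_col_sum (B (\<theta> 0)))\<bar> \<partial>\<nu>)
       + (\<integral>\<^sup>+ \<theta>. ennreal \<bar>ln (min_col_sum (B (\<theta> 0)))\<bar> \<partial>\<nu>) < \<infinity>
   \<and> (\<exists>n \<theta>w. emeasure \<nu> {\<theta> \<in> space \<nu>. \<forall>k<n. \<theta> k = \<theta>w k} > 0
          \<and> (\<forall>i j. word_prod B \<theta>w n $ i $ j > 0))"

end

theory Submission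
  imports Defs
begin

locale erg = prob_space M for M :: "'a measure" +
  fixes T :: "'a \<Rightarrow> 'a"
  assumes T_meas: "T \<in> M \<rightarrow>\<^sub>M M"
    and sp: "space M = UNIV"
    and T_pres: "\<And>A. A \<in> sets M \<Longrightarrow> emeasure M (T -` A) = emeasure M A"
    and T_erg: "\<And>A. A \<in> sets M \<Longrightarrow> T -` A = A \<Longrightarrow> measure M A = 0 \<or> measure M A = 1"
begin

lemma Tn_meas[measurable]: "(T ^^ n) \<in> M \<rightarrow>\<^sub>M M"
proof (induction n)
  case 0 then show ?case by (simp add: measurable_ident_sets)
next
  case (Suc n) then show ?case
    using measurable_compose[OF Suc T_meas] by simp
qed

lemma T_meas'[measurable]: "T \<in> M \<rightarrow>\<^sub>M M" by (rule T_meas)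

lemma Tn_vimage: "A \<in> sets M \<Longrightarrow> (T ^^ n) -` A \<in> sets M"
  using measurable_sets[OF Tn_meas, of A n] sp by simp

lemma Tn_pres: "A \<in> sets M \<Longrightarrow> emeasure M ((T ^^ n) -` A) = emeasure M A"
proof (induction n)
  case 0 then show ?case by simp
next
  case (Suc n)
  have "emeasure M ((T ^^ Suc n) -` A) = emeasure M (T -` ((T ^^ n) -` A))"
    by (rule arg_cong[where f="emeasure M"]) (auto simp: funpow_swap1)
  also have "\<dots> = emeasure M ((T^^n) -` A)" by (rule T_pres[OF Tn_vimage[OF Suc.prems]])
  also have "\<dots> = emeasure M A" by (rule Suc.IH[OF Suc.prems])
  finally show ?case .
qed

lemma distr_Tn: "distr M M (T ^^ n) = M"
proof (rule measure_eqI)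
  fix A assume "A \<in> sets (distr M M (T ^^ n))"
  then have A: "A \<in> sets M" by simp
  show "emeasure (distr M M (T ^^ n)) A = emeasure M A"
    using emeasure_distr[OF Tn_meas A] Tn_pres[OF A] sp by simp
qed simp

lemma integrable_Tn:
  assumes "integrable M f" shows "integrable M (\<lambda>x. f ((T ^^ n) x) :: real)"
proof -
  have fm: "f \<in> borel_measurable M" using assms by auto
  have "integrable (distr M M (T ^^ n)) f" using assms distr_Tn by simp
  then show ?thesis using integrable_distr_eq[OF Tn_meas fm] by simp
qed

lemma integral_Tn:
  assumes "integrable M f" shows "(\<integral>x. f ((T ^^ n) x) \<partial>M) = (\<integral>x. f x \<partial>M :: real)"
proof -
  have fm: "f \<in> borel_measurable M" using assms by auto
  show ?thesis using integral_distr[OF Tn_meas fm] distr_Tn by simp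
qed

definition birk :: "nat \<Rightarrow> ('a \<Rightarrow> real) \<Rightarrow> 'a \<Rightarrow> real" where
  "birk n f x = (\<Sum>i<n. f ((T ^^ i) x))"

lemma birk_0[simp]: "birk 0 f x = 0" by (simp add: birk_def)

lemma birk_Suc: "birk (Suc n) f x = f x + birk n f (T x)"
  unfolding birk_def sum.lessThan_Suc_shift by (simp add: funpow_swap1)

lemma birk_Suc_end: "birk (Suc n) f x = birk n f x + f ((T ^^ n) x)"
  unfolding birk_def by simp

lemma birk_meas[measurable]: assumes [measurable]: "f \<in> borel_measurable M" shows "birk n f \<in> borel_measurable M"
  unfolding birk_def by measurable

lemma birk_integrable: assumes "integrable M f" shows "integrable M (birk n f)"
  unfolding birk_def proof (rule Bochner_Integration.integrable_sum)
  fix i show "integrable M (\<lambda>x. f ((T ^^ i) x))" by (rule integrable_Tn[OF assms])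
qed

lemma birk_integral: "integrable M f \<Longrightarrow> (\<integral>x. birk n f x \<partial>M) = n * (\<integral>x. f x \<partial>M)"
  unfolding birk_def by (simp add: integral_sum integrable_Tn integral_Tn)

lemma birk_uminus: "birk n (\<lambda>x. - f x) x = - birk n f x"
  unfolding birk_def by (simp add: sum_negf)

lemma birk_diff: "birk n (\<lambda>x. f x - c) x = birk n f x - n * c"
  unfolding birk_def by (simp add: sum_subtractf)

lemma birk_mono: "(\<And>y. f y \<le> g y) \<Longrightarrow> birk n f x \<le> birk n g x"
  unfolding birk_def by (intro sum_mono) auto

lemma birk_add: "birk (n + m) f x = birk n f x + birk m f ((T ^^ n) x)"
proof (induction m)
  case 0 then show ?case by simp
next
  case (Suc m) show ?case
  proof -
    have "(T ^^ m) ((T ^^ n) x) = (T ^^ (n + m)) x" by (simp add: funpow_add add.commute)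
    then show ?thesis using Suc by (simp add: birk_Suc_end)
  qed
qed

lemma inv_sub:
  assumes S: "S \<in> sets M" and sub: "S \<subseteq> T -` S"
  shows "measure M S = 0 \<or> measure M S = 1"
proof -
  define X where "X n = (T ^^ n) -` S" for n
  have inc: "incseq X"
  proof (rule incseq_SucI)
    fix n show "X n \<subseteq> X (Suc n)" using sub by (auto simp: X_def)
  qed
  define A where "A = (\<Union>n. X n)"
  have XS: "range X \<subseteq> sets M" using Tn_vimage[OF S] by (auto simp: X_def)
  then have A: "A \<in> sets M" unfolding A_def by auto
  have "T -` A = (\<Union>n. X (Suc n))"
    by (auto simp: A_def X_def funpow_swap1)
  also have "\<dots> = A"
    using inc unfolding A_def incseq_Suc_iff by blast
  finally have inv: "T -` A = A" .
  have "(\<lambda>n. emeasure M (X n)) \<longlonglongrightarrow> emeasure M A"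
    using Lim_emeasure_incseq[OF XS inc] by (simp add: A_def)
  moreover have "(\<lambda>n. emeasure M (X n)) = (\<lambda>n. emeasure M S)"
    using Tn_pres[OF S] by (simp add: X_def)
  ultimately have "(\<lambda>n. emeasure M S) \<longlonglongrightarrow> emeasure M A" by simp
  then have "emeasure M A = emeasure M S" by (simp add: LIMSEQ_const_iff)
  then have "measure M A = measure M S" by (simp add: measure_def)
  then show ?thesis using T_erg[OF A inv] by simp
qed

lemma inv_sup:
  assumes S: "S \<in> sets M" and sub: "T -` S \<subseteq> S"
  shows "measure M S = 0 \<or> measure M S = 1"
proof -
  have C: "UNIV - S \<in> sets M" using S sp by (metis sets.compl_sets)
  have "UNIV - S \<subseteq> T -` (UNIV - S)" using sub by auto
  from inv_sub[OF C this] have "measure M (UNIV - S) = 0 \<or> measure M (UNIV - S) = 1" .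
  moreover have "measure M (UNIV - S) = 1 - measure M S"
    using prob_compl[OF S] sp by simp
  ultimately show ?thesis by auto
qed


subsection \<open>Maximal ergodic lemma\<close>

fun Fm :: "('a \<Rightarrow> real) \<Rightarrow> nat \<Rightarrow> 'a \<Rightarrow> real" where
  "Fm g 0 x = 0"
| "Fm g (Suc n) x = max (Fm g n x) (birk (Suc n) g x)"

lemma Fm_ge: "k \<le> n \<Longrightarrow> birk k g x \<le> Fm g n x"
proof (induction n)
  case 0 then show ?case by simp
next
  case (Suc n) then show ?case by (cases "k = Suc n") auto
qed

lemma Fm_attained: "\<exists>k\<le>n. Fm g n x = birk k g x"
proof (induction n)
  case 0 then show ?case by (intro exI[of _ 0]) simp
next
  case (Suc n)
  then obtain k where "k \<le> n" "Fm g n x = birk k g x" by auto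
  then show ?case by (cases "Fm g n x \<le> birk (Suc n) g x") (auto intro: exI[of _ "Suc n"] exI[of _ k])
qed

lemma Fm_nonneg: "0 \<le> Fm g n x"
  using Fm_ge[of 0 n g x] by simp

lemma Fm_mono: "Fm g n x \<le> Fm g (Suc n) x" by simp

lemma Fm_key: assumes "0 < Fm g n x" shows "Fm g n x \<le> g x + Fm g n (T x)"
proof -
  obtain k where k: "k \<le> n" "Fm g n x = birk k g x" using Fm_attained by blast
  have "k \<noteq> 0"
  proof
    assume "k = 0" with assms k show False by simp
  qed
  then obtain j where j: "k = Suc j" by (cases k) auto
  have "birk j g (T x) \<le> Fm g n (T x)" using k j by (intro Fm_ge) auto
  then show ?thesis using k j by (simp add: birk_Suc)
qed

lemma Fm_meas[measurable]: assumes [measurable]: "g \<in> borel_measurable M" shows "Fm g n \<in> borel_measurable M"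
  by (induction n) simp_all

lemma Fm_integrable: assumes "integrable M g" shows "integrable M (Fm g n)"
proof (induction n)
  case 0 then show ?case by simp
next
  case (Suc n)
  have "integrable M (\<lambda>x. max (Fm g n x) (birk (Suc n) g x))"
    by (intro Bochner_Integration.integrable_max Suc birk_integrable assms)
  then show ?case by simp
qed

lemma maximal_ergodic:
  assumes g: "integrable M g"
  shows "0 \<le> (\<integral>x. indicator {x. 0 < Fm g n x} x * g x \<partial>M)"
proof -
  let ?F = "Fm g n"
  let ?A = "{x. 0 < Fm g n x}"
  have gm[measurable]: "g \<in> borel_measurable M" using g by auto
  have "?A = {x\<in>space M. 0 < Fm g n x}" using sp by simp
  also have "\<dots> \<in> sets M" by measurable
  finally have Aset: "?A \<in> sets M" .
  have Fi: "integrable M ?F" by (rule Fm_integrable[OF g])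
  have FTi: "integrable M (\<lambda>x. ?F ((T ^^ 1) x))" by (rule integrable_Tn[OF Fi])
  have pw: "?F x - ?F (T x) \<le> indicator ?A x * g x" for x
  proof (cases "0 < ?F x")
    case True then show ?thesis using Fm_key[OF True] by simp
  next
    case False
    then have "?F x = 0" using Fm_nonneg[of g n x] by simp
    then show ?thesis using False Fm_nonneg[of g n "T x"] by simp
  qed
  have "(\<integral>x. ?F x - ?F (T x) \<partial>M) \<le> (\<integral>x. indicator ?A x * g x \<partial>M)"
  proof (rule integral_mono)
    show "integrable M (\<lambda>x. ?F x - ?F (T x))" using Fi FTi by simp
    show "integrable M (\<lambda>x. indicator ?A x * g x)"
      using integrable_mult_indicator[OF Aset g] by simp
  qed (rule pw)
  moreover have "(\<integral>x. ?F x - ?F (T x) \<partial>M) = 0"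
    using Fi FTi integral_Tn[OF Fi, of 1] by simp
  ultimately show ?thesis by simp
qed

subsection \<open>Birkhoff ergodic theorem\<close>

definition unb :: "('a \<Rightarrow> real) \<Rightarrow> 'a set" where
  "unb g = {x. \<forall>C::nat. \<exists>n. real C < birk n g x}"

lemma unb_iff: "x \<in> unb g \<longleftrightarrow> (\<forall>C::real. \<exists>n. C < birk n g x)"
proof
  assume a: "x \<in> unb g"
  show "\<forall>C::real. \<exists>n. C < birk n g x"
  proof
    fix C :: real
    obtain m :: nat where "C < real m" using reals_Archimedean2 by blast
    moreover obtain n where "real m < birk n g x" using a by (auto simp: unb_def)
    ultimately show "\<exists>n. C < birk n g x" by (intro exI[of _ n]) simp
  qed
qed (auto simp: unb_def)

lemma unb_meas[measurable]: assumes [measurable]: "g \<in> borel_measurable M" shows "unb g \<in> sets M"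
proof -
  have "unb g = {x \<in> space M. \<forall>C::nat. \<exists>n. real C < birk n g x}" by (simp add: unb_def sp)
  also have "\<dots> \<in> sets M" by measurable
  finally show ?thesis .
qed

lemma unb_inv: "T -` unb g = unb g"
proof (intro set_eqI iffI)
  fix x assume "x \<in> T -` unb g"
  then have a: "\<forall>C::real. \<exists>n. C < birk n g (T x)" by (simp add: unb_iff)
  show "x \<in> unb g" unfolding unb_iff
  proof
    fix C :: real
    obtain n where "C - g x < birk n g (T x)" using a by blast
    then have "C < birk (Suc n) g x" by (simp add: birk_Suc)
    then show "\<exists>n. C < birk n g x" by blast
  qed
next
  fix x assume "x \<in> unb g"
  then have a: "\<forall>C::real. \<exists>n. C < birk n g x" by (simp add: unb_iff)
  show "x \<in> T -` unb g" unfolding vimage_eq unb_iff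
  proof
    fix C :: real
    obtain n where n: "max C 0 + \<bar>g x\<bar> < birk n g x" using a by blast
    then have "n \<noteq> 0" by (cases n) auto
    then obtain m where m: "n = Suc m" by (cases n) auto
    have "C < birk m g (T x)" using n m by (simp add: birk_Suc)
    then show "\<exists>n. C < birk n g (T x)" by blast
  qed
qed

lemma unb_null:
  assumes f: "integrable M f" and d: "(\<integral>x. f x \<partial>M) < d"
  shows "unb (\<lambda>x. f x - d) \<in> null_sets M"
proof -
  define g where "g x = f x - d" for x
  have gi: "integrable M g" unfolding g_def by (intro Bochner_Integration.integrable_diff f integrable_const)
  have gm[measurable]: "g \<in> borel_measurable M" using gi by auto
  have E: "unb g \<in> sets M" by measurable
  have ig: "(\<integral>x. g x \<partial>M) < 0" using f d by (simp add: g_def prob_space)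
  have "measure M (unb g) \<noteq> 1"
  proof
    assume m1: "measure M (unb g) = 1"
    have ae: "AE x in M. x \<in> unb g"
      using m1 E by (simp add: prob_eq_1)
    define s where "s n x = indicator {x. 0 < Fm g n x} x * g x" for n x
    have lim: "(\<lambda>n. \<integral>x. s n x \<partial>M) \<longlonglongrightarrow> (\<integral>x. g x \<partial>M)"
    proof (rule integral_dominated_convergence[where w="\<lambda>x. norm (g x)"])
      show "integrable M (\<lambda>x. norm (g x))" using gi by simp
      show "s n \<in> borel_measurable M" for n unfolding s_def by measurable
      show "AE x in M. norm (s n x) \<le> norm (g x)" for n
        by (simp add: s_def indicator_def)
      show "AE x in M. (\<lambda>n. s n x) \<longlonglongrightarrow> g x"
        using ae
      proof eventually_elim
        case (elim x)
        then obtain n where n: "0 < birk n g x" using unb_iff by blast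
        have ev: "\<forall>k\<ge>n. s k x = g x"
        proof (intro allI impI)
          fix k assume "n \<le> k"
          then have "birk n g x \<le> Fm g k x" by (rule Fm_ge)
          then show "s k x = g x" using n by (simp add: s_def)
        qed
        show ?case by (rule tendsto_eventually) (use ev in \<open>auto simp: eventually_sequentially\<close>)
      qed
    qed simp
    have "0 \<le> (\<integral>x. g x \<partial>M)"
      by (rule LIMSEQ_le_const[OF lim]) (use maximal_ergodic[OF gi] in \<open>auto simp: s_def\<close>)
    then show False using ig by simp
  qed
  then have "measure M (unb g) = 0"
    using inv_sub[OF E] unb_inv[of g] by auto
  then show ?thesis using E unfolding g_def by (simp add: emeasure_eq_measure null_sets_def)
qed

lemma birk_upper:
  assumes f: "integrable M f"
  shows "AE x in M. \<forall>e>0. eventually (\<lambda>n. birk n f x / n < (\<integral>x. f x \<partial>M) + e) sequentially"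
proof -
  have "AE x in M. \<forall>d\<in>{d\<in>\<rat>. (\<integral>x. f x \<partial>M) < d}. x \<notin> unb (\<lambda>x. f x - d)"
  proof (rule AE_ball_countable')
    fix d assume "d \<in> {d\<in>\<rat>. (\<integral>x. f x \<partial>M) < d}"
    then show "AE x in M. x \<notin> unb (\<lambda>x. f x - d)" using unb_null[OF f] AE_not_in by auto
  next
    show "countable {d\<in>\<rat>. (\<integral>x. f x \<partial>M) < d}" by (rule countable_subset[OF _ countable_rat]) auto
  qed
  then show ?thesis
  proof eventually_elim
    case (elim x)
    show ?case
    proof (intro allI impI)
      fix e :: real assume e: "0 < e"
      obtain d where d: "d \<in> \<rat>" "(\<integral>x. f x \<partial>M) < d" "d < (\<integral>x. f x \<partial>M) + e / 2"
        using Rats_dense_in_real[of "(\<integral>x. f x \<partial>M)" "(\<integral>x. f x \<partial>M) + e / 2"] e by auto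
      then have "x \<notin> unb (\<lambda>x. f x - d)" using elim by auto
      then obtain C where C: "\<And>n. birk n (\<lambda>x. f x - d) x \<le> C"
        unfolding unb_iff by (auto simp: not_less)
      obtain N :: nat where N: "2 * \<bar>C\<bar> / e < real N" using reals_Archimedean2 by blast
      show "eventually (\<lambda>n. birk n f x / n < (\<integral>x. f x \<partial>M) + e) sequentially"
        unfolding eventually_sequentially
      proof (intro exI[of _ "Suc N"] allI impI)
        fix n assume n: "Suc N \<le> n"
        then have npos: "0 < real n" by simp
        have "birk n f x - n * d \<le> C" using C[of n] by (simp add: birk_diff)
        then have "birk n f x \<le> n * d + C" by simp
        then have "birk n f x / n \<le> d + C / n" using npos by (simp add: field_simps)
        moreover have "C / n < e / 2"
        proof -
          have "real N \<le> real n" using n by simp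
          then have "e * real N \<le> e * real n" using e by (intro mult_left_mono) auto
          moreover have "2 * \<bar>C\<bar> < e * real N" using N e by (simp add: field_simps)
          ultimately have "2 * \<bar>C\<bar> < e * real n" by linarith
          then show ?thesis using npos e by (simp add: field_simps)
        qed
        ultimately show "birk n f x / n < (\<integral>x. f x \<partial>M) + e" using d(3) by linarith
      qed
    qed
  qed
qed

lemma birkhoff:
  assumes f: "integrable M f"
  shows "AE x in M. (\<lambda>n. birk n f x / n) \<longlonglongrightarrow> (\<integral>x. f x \<partial>M)"
proof -
  have f': "integrable M (\<lambda>x. - f x)" using f by simp
  have "AE x in M. \<forall>e>0. eventually (\<lambda>n. birk n f x / n < (\<integral>x. f x \<partial>M) + e) sequentially"
    by (rule birk_upper[OF f])
  moreover have "AE x in M. \<forall>e>0. eventually (\<lambda>n. birk n (\<lambda>x. - f x) x / n < (\<integral>x. - f x \<partial>M) + e) sequentially"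
    by (rule birk_upper[OF f'])
  ultimately show ?thesis
  proof eventually_elim
    case (elim x)
    show ?case unfolding tendsto_iff
    proof (intro allI impI)
      fix e :: real assume e: "0 < e"
      have "eventually (\<lambda>n. birk n f x / n < (\<integral>x. f x \<partial>M) + e) sequentially"
        using elim(1) e by blast
      moreover have "eventually (\<lambda>n. birk n (\<lambda>x. - f x) x / n < (\<integral>x. - f x \<partial>M) + e) sequentially"
        using elim(2) e by blast
      ultimately show "eventually (\<lambda>n. dist (birk n f x / n) (\<integral>x. f x \<partial>M) < e) sequentially"
      proof eventually_elim
        case (elim n)
        then show ?case by (simp add: birk_uminus dist_real_def abs_less_iff)
      qed
    qed
  qed
qed


lemma birk_nonneg: "(\<And>y. 0 \<le> v y) \<Longrightarrow> 0 \<le> birk n v x"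
  unfolding birk_def by (intro sum_nonneg) auto

lemma birk_mono_len: assumes "\<And>y. 0 \<le> v y" "m \<le> n" shows "birk m v x \<le> birk n v x"
proof -
  have "birk n v x = birk m v x + birk (n - m) v ((T ^^ m) x)"
    using birk_add[of m "n - m" v x] assms(2) by simp
  moreover have "0 \<le> birk (n - m) v ((T ^^ m) x)" by (rule birk_nonneg) (rule assms(1))
  ultimately show ?thesis by linarith
qed

lemma tail_le:
  assumes v: "\<And>y. 0 \<le> v y" and k: "k \<le> n"
  shows "birk (n - k) v ((T ^^ k) x) - birk (n - k - K) v ((T ^^ k) x) \<le> birk n v x - birk (n - K) v x"
proof -
  have n: "birk n v x = birk k v x + birk (n - k) v ((T ^^ k) x)"
    using birk_add[of k "n - k" v x] k by simp
  show ?thesis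
  proof (cases "k \<le> n - K")
    case True
    have "birk (n - K) v x = birk (k + (n - K - k)) v x"
      by (rule arg_cong[where f="\<lambda>m. birk m v x"]) (use True in arith)
    also have "\<dots> = birk k v x + birk (n - K - k) v ((T ^^ k) x)"
      by (rule birk_add)
    finally have "birk (n - K) v x = birk k v x + birk (n - K - k) v ((T ^^ k) x)" .
    moreover have "n - K - k = n - k - K" by simp
    ultimately show ?thesis using n by simp
  next
    case False
    then have z: "n - k - K = 0" by simp
    have "birk (n - K) v x \<le> birk k v x" using False by (intro birk_mono_len v) simp
    then show ?thesis using n z by simp
  qed
qed

lemma tail_lim:
  assumes "(\<lambda>n. birk n v x / n) \<longlonglongrightarrow> a"
  shows "(\<lambda>n. birk (n - K) v x / n) \<longlonglongrightarrow> a"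
proof -
  have 1: "(\<lambda>n. birk (n - K) v x / real (n - K)) \<longlonglongrightarrow> a"
    using seq_offset_neg[OF assms, of K] by simp
  have "(\<lambda>n. 1 - real K / real n) \<longlonglongrightarrow> 1 - 0"
    by (intro tendsto_diff tendsto_const tendsto_divide_0[OF tendsto_const filterlim_at_top_imp_at_infinity[OF filterlim_real_sequentially]])
  moreover have "eventually (\<lambda>n. 1 - real K / real n = real (n - K) / real n) sequentially"
    unfolding eventually_sequentially
    by (intro exI[of _ "Suc K"]) (auto simp: of_nat_diff field_simps)
  ultimately have 2: "(\<lambda>n. real (n - K) / real n) \<longlonglongrightarrow> 1"
    using Lim_transform_eventually by fastforce
  have eq: "(\<lambda>n. birk (n - K) v x / real (n - K) * (real (n - K) / real n)) = (\<lambda>n. birk (n - K) v x / n)"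
  proof (rule ext)
    fix n show "birk (n - K) v x / real (n - K) * (real (n - K) / real n) = birk (n - K) v x / n"
      by (cases "n - K = 0") auto
  qed
  from tendsto_mult[OF 1 2] have "(\<lambda>n. birk (n - K) v x / real (n - K) * (real (n - K) / real n)) \<longlonglongrightarrow> a * 1" .
  then show ?thesis unfolding eq by simp
qed

end

subsection \<open>Kingman\<close>

locale kingman = erg +
  fixes g :: "nat \<Rightarrow> 'a \<Rightarrow> real" and u l :: "'a \<Rightarrow> real"
  assumes g_meas[measurable]: "\<And>n. g n \<in> borel_measurable M"
    and g0: "\<And>x. g 0 x = 0"
    and g_sub: "\<And>n m x. g (n + m) x \<le> g n x + g m ((T ^^ n) x)"
    and u_int: "integrable M u" and g1u: "\<And>x. g 1 x \<le> u x"
    and l_int: "integrable M l" and gl: "\<And>n x. birk n l x \<le> g n x"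
begin

lemma g_le_birk: "g n x \<le> birk n u x"
proof (induction n arbitrary: x)
  case 0 then show ?case by (simp add: g0)
next
  case (Suc n)
  have "g (n + 1) x \<le> g n x + g 1 ((T ^^ n) x)" by (rule g_sub)
  also have "\<dots> \<le> birk n u x + u ((T ^^ n) x)" using Suc g1u by (intro add_mono) auto
  finally show ?case by (simp add: birk_Suc_end)
qed

definition V :: "real \<Rightarrow> 'a set" where
  "V q = {x. \<exists>r\<in>\<rat>. r < q \<and> (\<forall>N. \<exists>n\<ge>N. g n x < n * r)}"

lemma V_meas[measurable]: "V q \<in> sets M"
proof -
  have "V q = {x\<in>space M. \<exists>r\<in>{r\<in>\<rat>. r < q}. (\<forall>N::nat. \<exists>n\<ge>N. g n x < n * r)}"
    by (auto simp: V_def sp)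
  also have "\<dots> \<in> sets M"
    by (intro sets.sets_Collect_countable_Ex' countable_subset[OF _ countable_rat]) auto
  finally show ?thesis .
qed

lemma V_mono: "q1 \<le> q2 \<Longrightarrow> V q1 \<subseteq> V q2"
  unfolding V_def by force

lemma V_inv: "T -` V q \<subseteq> V q"
proof
  fix x assume "x \<in> T -` V q"
  then obtain r where r: "r \<in> \<rat>" "r < q" and fr: "\<forall>N. \<exists>n\<ge>N. g n (T x) < n * r"
    by (auto simp: V_def)
  obtain r' where r': "r' \<in> \<rat>" "r < r'" "r' < q" using Rats_dense_in_real[OF r(2)] by blast
  obtain K :: nat where K: "(g 1 x - r') / (r' - r) < K" using reals_Archimedean2 by blast
  have "\<forall>N. \<exists>n\<ge>N. g n x < n * r'"
  proof
    fix N
    obtain n where n: "n \<ge> max N K" "g n (T x) < n * r" using fr by blast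
    have "g (1 + n) x \<le> g 1 x + g n ((T ^^ 1) x)" by (rule g_sub)
    then have "g (Suc n) x \<le> g 1 x + g n (T x)" by simp
    also have "\<dots> < g 1 x + n * r" using n by simp
    also have "\<dots> \<le> (Suc n) * r'"
    proof -
      have "g 1 x - r' < K * (r' - r)" using K r' by (simp add: field_simps)
      also have "\<dots> \<le> n * (r' - r)" using n r' by (intro mult_right_mono) auto
      finally show ?thesis by (simp add: algebra_simps)
    qed
    finally show "\<exists>n\<ge>N. g n x < n * r'" using n by (intro exI[of _ "Suc n"]) auto
  qed
  then show "x \<in> V q" using r' by (auto simp: V_def)
qed

lemma V_01: "measure M (V q) = 0 \<or> measure M (V q) = 1"
  by (rule inv_sup[OF V_meas V_inv])

lemma V_low: assumes "q \<le> (\<integral>x. l x \<partial>M)" shows "measure M (V q) = 0"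
proof -
  have "AE x in M. x \<notin> V q"
    using birkhoff[OF l_int]
  proof eventually_elim
    case (elim x)
    show "x \<notin> V q"
    proof
      assume "x \<in> V q"
      then obtain r where r: "r < q" and fr: "\<forall>N. \<exists>n\<ge>N. g n x < n * r" by (auto simp: V_def)
      have "eventually (\<lambda>n. r < birk n l x / n) sequentially"
        using order_tendstoD(1)[OF elim] r assms by simp
      then obtain N where N: "\<And>n. n \<ge> N \<Longrightarrow> r < birk n l x / n" by (auto simp: eventually_sequentially)
      obtain n where n: "n \<ge> Suc N" "g n x < n * r" using fr by blast
      have "r < birk n l x / n" using N n by simp
      then have "n * r < birk n l x" using n by (simp add: field_simps)
      then show False using gl[of n x] n by simp
    qed
  qed
  then have "emeasure M (V q) = 0" using AE_iff_measurable[OF V_meas] sp by auto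
  then show ?thesis by (simp add: emeasure_eq_measure)
qed

lemma V_high: assumes "(\<integral>x. u x \<partial>M) < q" shows "measure M (V q) = 1"
proof -
  obtain r where r: "r \<in> \<rat>" "(\<integral>x. u x \<partial>M) < r" "r < q" using Rats_dense_in_real[OF assms] by blast
  have "AE x in M. x \<in> V q"
    using birkhoff[OF u_int]
  proof eventually_elim
    case (elim x)
    have "eventually (\<lambda>n. birk n u x / n < r) sequentially"
      using order_tendstoD(2)[OF elim] r by simp
    then obtain N where N: "\<And>n. n \<ge> N \<Longrightarrow> birk n u x / n < r" by (auto simp: eventually_sequentially)
    have "\<forall>N'. \<exists>n\<ge>N'. g n x < n * r"
    proof
      fix N'
      let ?n = "Suc (max N N')"
      have "birk ?n u x / ?n < r" using N[of ?n] by simp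
      then have "birk ?n u x < ?n * r" by (simp add: field_simps del: of_nat_Suc)
      then show "\<exists>n\<ge>N'. g n x < n * r" using g_le_birk[of ?n x] by (intro exI[of _ ?n]) auto
    qed
    then show "x \<in> V q" using r by (auto simp: V_def)
  qed
  then show ?thesis using V_meas by (simp add: prob_eq_1)
qed

end

context erg begin
lemma birk_plus: "birk n (\<lambda>y. f y + h y) x = birk n f x + birk n h x"
  unfolding birk_def by (simp add: sum.distrib)
lemma birk_const: "birk n (\<lambda>y. c) x = n * c"
  unfolding birk_def by simp
end

context kingman begin

definition Bk :: "real \<Rightarrow> nat \<Rightarrow> 'a set" where
  "Bk q K = {x. \<forall>k\<in>{1..K}. k * q < g k x}"

lemma Bk_meas[measurable]: "Bk q K \<in> sets M"
proof -
  have "Bk q K = {x\<in>space M. \<forall>k\<in>{1..K}. k * q < g k x}" by (simp add: Bk_def sp)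
  also have "\<dots> \<in> sets M" by measurable
  finally show ?thesis .
qed

definition wK :: "real \<Rightarrow> nat \<Rightarrow> 'a \<Rightarrow> real" where
  "wK q K x = q + indicator (Bk q K) x * (max (u x) 0 + \<bar>q\<bar> - q)"

definition vq :: "real \<Rightarrow> 'a \<Rightarrow> real" where
  "vq q x = max (u x) 0 + \<bar>q\<bar>"

lemma wK_ge: "q \<le> wK q K x"
  unfolding wK_def by (auto simp: indicator_def)

lemma wK_in: "x \<in> Bk q K \<Longrightarrow> wK q K x = max (u x) 0 + \<bar>q\<bar>"
  unfolding wK_def by simp

lemma wK_v: "u x \<le> wK q K x + vq q x"
  using wK_ge[of q K x] unfolding vq_def by auto

lemma vq_nonneg: "0 \<le> vq q y"
  unfolding vq_def by auto

lemma covering: "g n x \<le> birk n (wK q K) x + (birk n (vq q) x - birk (n - K) (vq q) x)"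
proof (induction n arbitrary: x rule: less_induct)
  case (less n)
  let ?w = "wK q K" and ?v = "vq q"
  show ?case
  proof (cases "n = 0")
    case True then show ?thesis by (simp add: g0)
  next
    case False
    show ?thesis
    proof (cases "x \<in> Bk q K")
      case True
      obtain m where m: "n = Suc m" using False by (cases n) auto
      have "g (1 + m) x \<le> g 1 x + g m ((T ^^ 1) x)" by (rule g_sub)
      then have a: "g n x \<le> g 1 x + g m (T x)" using m by simp
      have b: "g 1 x \<le> ?w x" using g1u[of x] wK_in[OF True] by simp
      have c: "g m (T x) \<le> birk m ?w (T x) + (birk m ?v (T x) - birk (m - K) ?v (T x))"
        using less.IH[of m "T x"] m by simp
      have d: "birk m ?v (T x) - birk (m - K) ?v (T x) \<le> birk n ?v x - birk (n - K) ?v x"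
        using tail_le[of ?v 1 n x K] vq_nonneg m by simp
      have e: "birk n ?w x = ?w x + birk m ?w (T x)" using m by (simp add: birk_Suc)
      show ?thesis using a b c d e by linarith
    next
      case False
      then obtain k where k: "1 \<le> k" "k \<le> K" "g k x \<le> k * q"
        unfolding Bk_def by (auto simp: not_less)
      show ?thesis
      proof (cases "k \<le> n")
        case True
        let ?y = "(T ^^ k) x"
        have "g (k + (n - k)) x \<le> g k x + g (n - k) ?y" by (rule g_sub)
        then have a: "g n x \<le> g k x + g (n - k) ?y" using True by simp
        have c: "g (n - k) ?y \<le> birk (n - k) ?w ?y + (birk (n - k) ?v ?y - birk (n - k - K) ?v ?y)"
          using less.IH[of "n - k" ?y] k True \<open>n \<noteq> 0\<close> by simp
        have d: "birk (n - k) ?v ?y - birk (n - k - K) ?v ?y \<le> birk n ?v x - birk (n - K) ?v x"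
          using tail_le[of ?v k n x K] vq_nonneg True by simp
        have "birk (k + (n - k)) ?w x = birk k ?w x + birk (n - k) ?w ?y" by (rule birk_add)
        then have e: "birk n ?w x = birk k ?w x + birk (n - k) ?w ?y" using True by simp
        have "birk k (\<lambda>y. q) x \<le> birk k ?w x" by (rule birk_mono) (rule wK_ge)
        then have f: "k * q \<le> birk k ?w x" by (simp add: birk_const)
        show ?thesis using a c d e f k by linarith
      next
        case False
        then have z: "n - K = 0" using k by simp
        have "g n x \<le> birk n u x" by (rule g_le_birk)
        also have "\<dots> \<le> birk n (\<lambda>y. ?w y + ?v y) x" by (rule birk_mono) (rule wK_v)
        also have "\<dots> = birk n ?w x + birk n ?v x" by (rule birk_plus)
        finally show ?thesis using z by simp
      qed
    qed
  qed
qed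

lemma wK_int: "integrable M (wK q K)"
proof -
  have um[measurable]: "u \<in> borel_measurable M" using u_int by auto
  have "integrable M (\<lambda>x. max (u x) 0 + \<bar>q\<bar> - q)"
    by (intro Bochner_Integration.integrable_diff
        Bochner_Integration.integrable_add integrable_const Bochner_Integration.integrable_max u_int)
  from integrable_mult_indicator[OF Bk_meas this, of q K]
  have "integrable M (\<lambda>x. indicator (Bk q K) x * (max (u x) 0 + \<bar>q\<bar> - q))" by simp
  then show ?thesis unfolding wK_def by (intro Bochner_Integration.integrable_add integrable_const)
qed

lemma vq_int: "integrable M (vq q)"
  unfolding vq_def by (intro Bochner_Integration.integrable_add integrable_const Bochner_Integration.integrable_max u_int)

lemma king_upper:
  assumes q1: "measure M (V q) = 1"
  shows "AE x in M. \<forall>e>0. eventually (\<lambda>n. g n x / n < q + e) sequentially"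
proof -
  have um[measurable]: "u \<in> borel_measurable M" using u_int by auto
  have aeV: "AE x in M. x \<in> V q" using q1 by (simp add: prob_eq_1)
  have notall: "\<exists>K. x \<notin> Bk q K" if xV: "x \<in> V q" for x
  proof -
    obtain r where r: "r < q" "\<forall>N. \<exists>n\<ge>N. g n x < n * r" using xV unfolding V_def by blast
    obtain n where n: "n \<ge> 1" "g n x < n * r" using r(2) by blast
    have nr: "n * r \<le> n * q" using r(1) by (intro mult_left_mono) auto
    have "\<not> (n * q < g n x)" using nr n(2) by linarith
    then have "x \<notin> Bk q n" using n unfolding Bk_def by auto
    then show ?thesis by blast
  qed
  have Bk_dec: "x \<notin> Bk q K'" if "x \<notin> Bk q K" "K \<le> K'" for x K K'
    using that unfolding Bk_def by auto
  have wlim: "(\<lambda>K. \<integral>x. wK q K x \<partial>M) \<longlonglongrightarrow> (\<integral>x. q \<partial>M)"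
  proof (rule integral_dominated_convergence[where w="\<lambda>x. \<bar>u x\<bar> + 3 * \<bar>q\<bar>"])
    show "integrable M (\<lambda>x. \<bar>u x\<bar> + 3 * \<bar>q\<bar>)"
      by (intro Bochner_Integration.integrable_add integrable_const integrable_abs u_int)
    show "wK q K \<in> borel_measurable M" for K using wK_int by auto
    show "AE x in M. norm (wK q K x) \<le> \<bar>u x\<bar> + 3 * \<bar>q\<bar>" for K
      by (intro AE_I2) (auto simp: wK_def indicator_def)
    show "AE x in M. (\<lambda>K. wK q K x) \<longlonglongrightarrow> q"
      using aeV
    proof eventually_elim
      case (elim x)
      obtain K where K: "x \<notin> Bk q K" using notall[OF elim] by blast
      have "\<forall>K'\<ge>K. wK q K' x = q" using Bk_dec[OF K] by (auto simp: wK_def)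
      then show ?case by (intro tendsto_eventually) (auto simp: eventually_sequentially)
    qed
  qed simp
  then have wlim': "(\<lambda>K. \<integral>x. wK q K x \<partial>M) \<longlonglongrightarrow> q" by (simp add: prob_space)
  have ae: "AE x in M. \<forall>K. (\<lambda>n. birk n (wK q K) x / n) \<longlonglongrightarrow> (\<integral>x. wK q K x \<partial>M)"
    by (subst AE_all_countable) (intro allI birkhoff wK_int)
  have ae2: "AE x in M. (\<lambda>n. birk n (vq q) x / n) \<longlonglongrightarrow> (\<integral>x. vq q x \<partial>M)"
    by (intro birkhoff vq_int)
  show ?thesis using ae ae2
  proof eventually_elim
    case (elim x)
    show ?case
    proof (intro allI impI)
      fix e :: real assume e: "0 < e"
      have "eventually (\<lambda>K. (\<integral>x. wK q K x \<partial>M) < q + e / 2) sequentially"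
        using order_tendstoD(2)[OF wlim'] e by simp
      then obtain K where K: "(\<integral>x. wK q K x \<partial>M) < q + e / 2"
        by (auto simp: eventually_sequentially)
      let ?R = "\<lambda>n. birk n (wK q K) x / n + birk n (vq q) x / n - birk (n - K) (vq q) x / n"
      have "?R \<longlonglongrightarrow> (\<integral>x. wK q K x \<partial>M) + (\<integral>x. vq q x \<partial>M) - (\<integral>x. vq q x \<partial>M)"
        by (intro tendsto_diff tendsto_add elim(1)[rule_format] elim(2) tail_lim)
      then have "eventually (\<lambda>n. ?R n < q + e / 2) sequentially"
        using K by (intro order_tendstoD(2)) auto
      then show "eventually (\<lambda>n. g n x / n < q + e) sequentially"
      proof eventually_elim
        case (elim n)
        have "g n x / n \<le> (birk n (wK q K) x + (birk n (vq q) x - birk (n - K) (vq q) x)) / n"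
          by (intro divide_right_mono covering) simp
        also have "\<dots> = ?R n" by (simp add: field_simps add_divide_distrib diff_divide_distrib)
        finally show ?case using elim e by linarith
      qed
    qed
  qed
qed

theorem kingman_conv: "\<exists>c. AE x in M. (\<lambda>n. g n x / n) \<longlonglongrightarrow> c"
proof -
  define Q where "Q = {q\<in>\<rat>. measure M (V q) = 1}"
  have cQ: "countable Q" unfolding Q_def by (rule countable_subset[OF _ countable_rat]) auto
  obtain q0 where q0: "q0 \<in> \<rat>" "(\<integral>x. u x \<partial>M) < q0"
    using Rats_dense_in_real[of "(\<integral>x. u x \<partial>M)" "(\<integral>x. u x \<partial>M) + 1"] by auto
  have Qne: "Q \<noteq> {}" using V_high[OF q0(2)] q0(1) unfolding Q_def by auto
  have Qlb: "(\<integral>x. l x \<partial>M) \<le> q" if "q \<in> Q" for q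
  proof (rule ccontr)
    assume "\<not> (\<integral>x. l x \<partial>M) \<le> q"
    then have "measure M (V q) = 0" by (intro V_low) simp
    then show False using that unfolding Q_def by simp
  qed
  then have bdd: "bdd_below Q" by (rule bdd_belowI)
  define c where "c = Inf Q"
  have ae1: "AE x in M. \<forall>q\<in>Q. \<forall>e>0. eventually (\<lambda>n. g n x / n < q + e) sequentially"
    by (rule AE_ball_countable'[OF _ cQ]) (intro king_upper, simp add: Q_def)
  have ae2: "AE x in M. \<forall>q\<in>{q\<in>\<rat>. q \<notin> Q}. x \<notin> V q"
  proof (rule AE_ball_countable')
    fix q assume q: "q \<in> {q\<in>\<rat>. q \<notin> Q}"
    then have "measure M (V q) = 0" using V_01[of q] unfolding Q_def by auto
    then have "V q \<in> null_sets M" using V_meas by (simp add: null_sets_def emeasure_eq_measure)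
    then show "AE x in M. x \<notin> V q" by (rule AE_not_in)
  qed (rule countable_subset[OF _ countable_rat], auto)
  show ?thesis
  proof (intro exI[of _ c])
    show "AE x in M. (\<lambda>n. g n x / n) \<longlonglongrightarrow> c"
      using ae1 ae2
    proof eventually_elim
      case (elim x)
      show ?case unfolding tendsto_iff
      proof (intro allI impI)
        fix e :: real assume e: "0 < e"
        obtain q where q: "q \<in> Q" "q < c + e / 2"
          using cInf_less_iff[OF Qne bdd, of "c + e / 2"] e unfolding c_def by auto
        have up: "eventually (\<lambda>n. g n x / n < q + e / 2) sequentially"
          using elim(1) q e by auto
        obtain q1 where q1: "q1 \<in> \<rat>" "c - e < q1" "q1 < c"
          using Rats_dense_in_real[of "c - e" c] e by auto
        obtain r where r: "r \<in> \<rat>" "c - e < r" "r < q1"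
          using Rats_dense_in_real[of "c - e" q1] q1 by auto
        have "q1 \<notin> Q"
        proof
          assume "q1 \<in> Q"
          then have "c \<le> q1" unfolding c_def by (rule cInf_lower[OF _ bdd])
          then show False using q1 by simp
        qed
        then have "x \<notin> V q1" using elim(2) q1 by auto
        then have "\<not> (\<forall>N. \<exists>n\<ge>N. g n x < n * r)" using r unfolding V_def by auto
        then obtain N where N: "\<And>n. n \<ge> N \<Longrightarrow> n * r \<le> g n x" by (auto simp: not_less)
        have low: "eventually (\<lambda>n. r \<le> g n x / n) sequentially"
          unfolding eventually_sequentially
        proof (intro exI[of _ "Suc N"] allI impI)
          fix n assume n: "Suc N \<le> n"
          then have "n * r \<le> g n x" using N by simp
          then show "r \<le> g n x / n" using n by (simp add: field_simps)
        qed
        show "eventually (\<lambda>n. dist (g n x / n) c < e) sequentially"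
          using up low
        proof eventually_elim
          case (elim n)
          then show ?case using q r by (simp add: dist_real_def abs_less_iff)
        qed
      qed
    qed
  qed
qed

end

context erg begin
lemma recurrence:
  assumes C: "C \<in> sets M" and pos: "0 < measure M C"
  shows "AE x in M. \<forall>N. \<exists>i\<ge>N. (T ^^ i) x \<in> C"
proof -
  have "integrable M (\<lambda>x. indicator C x *\<^sub>R (1::real))" by (rule integrable_indicator) (auto simp: C emeasure_eq_measure)
  then have ii: "integrable M (indicator C :: 'a \<Rightarrow> real)" by simp
  have "(\<integral>x. indicator C x \<partial>M) = measure M C" using C by simp
  with birkhoff[OF ii] have "AE x in M. (\<lambda>n. birk n (indicator C) x / n) \<longlonglongrightarrow> measure M C" by simp
  then show ?thesis
  proof eventually_elim
    case (elim x)
    show ?case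
    proof (rule ccontr)
      assume "\<not> (\<forall>N. \<exists>i\<ge>N. (T ^^ i) x \<in> C)"
      then obtain N where N: "\<And>i. i \<ge> N \<Longrightarrow> (T ^^ i) x \<notin> C" by (metis not_le)
      have bd0: "birk n (indicator C) x \<le> min n N" for n
      proof (induction n)
        case 0 then show ?case by simp
      next
        case (Suc n)
        have a: "birk (Suc n) (indicator C) x = birk n (indicator C) x + indicator C ((T ^^ n) x)"
          by (rule birk_Suc_end)
        have b: "indicator C ((T ^^ n) x) \<le> (1::real)" by (simp add: indicator_def)
        show ?case
        proof (cases "n \<ge> N")
          case True
          then have "indicator C ((T ^^ n) x) = (0::real)" using N by simp
          then show ?thesis using a Suc True by simp
        next
          case False
          have i1: "birk n (indicator C) x \<le> real n" using Suc False by simp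
          have i2: "real (min (Suc n) N) = real n + 1" using False by simp
          show ?thesis using a b i1 i2 by linarith
        qed
      qed
      have bd: "birk n (indicator C) x \<le> N" for n using bd0[of n] by simp
      have "(\<lambda>n. real N / real n) \<longlonglongrightarrow> 0"
        by (intro tendsto_divide_0[OF tendsto_const filterlim_at_top_imp_at_infinity[OF filterlim_real_sequentially]])
      moreover have "birk n (indicator C) x / n \<le> real N / real n" for n
        using bd[of n] by (intro divide_right_mono) auto
      ultimately have "measure M C \<le> 0"
        using elim by (intro LIMSEQ_le[OF elim]) auto
      then show False using pos by simp
    qed
  qed
qed
end

section \<open>Matrices\<close>

definition colsum :: "real^'n::finite^'n \<Rightarrow> 'n \<Rightarrow> real" where
  "colsum A j = (\<Sum>i\<in>UNIV. A $ i $ j)"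

lemma colsum_mult: "colsum (A ** B) j = (\<Sum>k\<in>UNIV. colsum A k * B $ k $ j)"
  unfolding colsum_def matrix_matrix_mult_def by (simp add: sum_distrib_right) (rule sum.swap)

lemma entry_colsum: "entry_sum A = (\<Sum>j\<in>UNIV. colsum A j)"
  unfolding entry_sum_def colsum_def by (rule sum.swap)

lemma nonneg_mult: "nonneg_mat A \<Longrightarrow> nonneg_mat B \<Longrightarrow> nonneg_mat (A ** B)"
  unfolding nonneg_mat_def matrix_matrix_mult_def by (auto intro!: sum_nonneg)

lemma colsum_nonneg: "nonneg_mat A \<Longrightarrow> 0 \<le> colsum A j"
  unfolding nonneg_mat_def colsum_def by (auto intro!: sum_nonneg)

lemma min_le_col: "min_col_sum A \<le> colsum A j"
  unfolding min_col_sum_def colsum_def by (intro Min_le) auto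

lemma col_le_max: "colsum A j \<le> max_col_sum A"
  unfolding max_col_sum_def colsum_def by (intro Max_ge) auto

lemma min_ex: "\<exists>j. min_col_sum A = colsum A j"
proof -
  have "min_col_sum A \<in> range (colsum A)"
    unfolding min_col_sum_def colsum_def by (intro Min_in) auto
  then show ?thesis by auto
qed

lemma max_ex: "\<exists>j. max_col_sum A = colsum A j"
proof -
  have "max_col_sum A \<in> range (colsum A)"
    unfolding max_col_sum_def colsum_def by (intro Max_in) auto
  then show ?thesis by auto
qed

lemma min_nonneg: "nonneg_mat A \<Longrightarrow> 0 \<le> min_col_sum A"
  using min_ex[of A] colsum_nonneg by metis

lemma max_nonneg: "nonneg_mat A \<Longrightarrow> 0 \<le> max_col_sum A"
  using max_ex[of A] colsum_nonneg by metis

lemma min_mult: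
  assumes A: "nonneg_mat A" and B: "nonneg_mat B"
  shows "min_col_sum A * min_col_sum B \<le> min_col_sum (A ** B)"
proof -
  obtain j where j: "min_col_sum (A ** B) = colsum (A ** B) j" using min_ex by blast
  have "min_col_sum A * min_col_sum B \<le> min_col_sum A * colsum B j"
    using min_nonneg[OF A] min_le_col by (intro mult_left_mono) auto
  also have "\<dots> = (\<Sum>k\<in>UNIV. min_col_sum A * B $ k $ j)"
    unfolding colsum_def by (simp add: sum_distrib_left)
  also have "\<dots> \<le> (\<Sum>k\<in>UNIV. colsum A k * B $ k $ j)"
    using B unfolding nonneg_mat_def by (intro sum_mono mult_right_mono min_le_col) auto
  also have "\<dots> = min_col_sum (A ** B)" using j by (simp add: colsum_mult)
  finally show ?thesis .
qed

lemma max_mult: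
  assumes A: "nonneg_mat A" and B: "nonneg_mat B"
  shows "max_col_sum (A ** B) \<le> max_col_sum A * max_col_sum B"
proof -
  obtain j where j: "max_col_sum (A ** B) = colsum (A ** B) j" using max_ex by blast
  have "max_col_sum (A ** B) = (\<Sum>k\<in>UNIV. colsum A k * B $ k $ j)" using j by (simp add: colsum_mult)
  also have "\<dots> \<le> (\<Sum>k\<in>UNIV. max_col_sum A * B $ k $ j)"
    using B unfolding nonneg_mat_def by (intro sum_mono mult_right_mono col_le_max) auto
  also have "\<dots> = max_col_sum A * colsum B j"
    unfolding colsum_def by (simp add: sum_distrib_left)
  also have "\<dots> \<le> max_col_sum A * max_col_sum B"
    using max_nonneg[OF A] col_le_max by (intro mult_left_mono) auto
  finally show ?thesis .
qed

lemma col_le_entry: "nonneg_mat A \<Longrightarrow> colsum A j \<le> entry_sum A"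
  unfolding entry_colsum by (rule member_le_sum) (auto intro: colsum_nonneg)

lemma entry_mult:
  assumes A: "nonneg_mat A" and B: "nonneg_mat B"
  shows "entry_sum (A ** B) \<le> entry_sum A * entry_sum B"
proof -
  have "entry_sum (A ** B) = (\<Sum>j\<in>UNIV. \<Sum>k\<in>UNIV. colsum A k * B $ k $ j)"
    unfolding entry_colsum colsum_mult by simp
  also have "\<dots> \<le> (\<Sum>j\<in>UNIV. \<Sum>k\<in>UNIV. entry_sum A * B $ k $ j)"
    using B A unfolding nonneg_mat_def by (intro sum_mono mult_right_mono col_le_entry) (auto simp: nonneg_mat_def)
  also have "\<dots> = entry_sum A * entry_sum B"
    unfolding entry_colsum colsum_def by (simp add: sum_distrib_left)
  finally show ?thesis .
qed

lemma min_le_entry: "nonneg_mat A \<Longrightarrow> min_col_sum A \<le> entry_sum A"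
  using min_le_col col_le_entry order_trans by metis

lemma entry_le_max: "entry_sum A \<le> real CARD('n) * max_col_sum (A :: real^'n::finite^'n)"
proof -
  have "entry_sum A \<le> (\<Sum>j\<in>(UNIV::'n set). max_col_sum A)"
    unfolding entry_colsum by (intro sum_mono col_le_max)
  then show ?thesis by simp
qed

lemma min_le_max: "min_col_sum A \<le> max_col_sum A"
  using min_le_col col_le_max order_trans by metis

lemma pos_min_ex: assumes "\<forall>i j. 0 < P $ i $ j" shows "\<exists>p>0. \<forall>i j. p \<le> (P :: real^'n::finite^'n) $ i $ j"
proof -
  define p where "p = Min (range (\<lambda>ij::'n \<times> 'n. P $ fst ij $ snd ij))"
  have "p \<in> range (\<lambda>ij::'n \<times> 'n. P $ fst ij $ snd ij)" unfolding p_def by (intro Min_in) auto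
  then have "0 < p" using assms by auto
  moreover have "p \<le> P $ i $ j" for i j unfolding p_def by (rule Min_le) (auto intro: image_eqI[of _ _ "(i, j)"])
  ultimately show ?thesis by blast
qed

lemma pos_word:
  assumes A: "nonneg_mat A" and p: "\<forall>i j. p \<le> P $ i $ j"
  shows "p * entry_sum A \<le> min_col_sum (A ** P)"
proof -
  obtain j where j: "min_col_sum (A ** P) = colsum (A ** P) j" using min_ex by blast
  have "p * entry_sum A = (\<Sum>k\<in>UNIV. colsum A k * p)"
    unfolding entry_colsum by (simp add: sum_distrib_left mult.commute)
  also have "\<dots> \<le> (\<Sum>k\<in>UNIV. colsum A k * P $ k $ j)"
    using p by (intro sum_mono mult_left_mono colsum_nonneg A) auto
  also have "\<dots> = min_col_sum (A ** P)" using j by (simp add: colsum_mult)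
  finally show ?thesis .
qed

lemma allow_min_pos: assumes "allowable B" shows "0 < min_col_sum B"
proof -
  obtain j where j: "min_col_sum B = colsum B j" using min_ex by blast
  obtain i where i: "0 < B $ i $ j" using assms unfolding allowable_def by blast
  have nn: "nonneg_mat B" using assms unfolding allowable_def by simp
  have "B $ i $ j \<le> colsum B j" unfolding colsum_def
    using nn unfolding nonneg_mat_def by (intro member_le_sum) auto
  then show ?thesis using i j by simp
qed

lemma colsum_mat1: "colsum (mat 1 :: real^'n::finite^'n) j = 1"
  unfolding colsum_def mat_def by (simp add: if_distrib cong: if_cong)

lemma min_mat1: "min_col_sum (mat 1 :: real^'n::finite^'n) = 1"
  using min_ex[of "mat 1 :: real^'n^'n"] colsum_mat1 by metis

lemma max_mat1: "max_col_sum (mat 1 :: real^'n::finite^'n) = 1"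
  using max_ex[of "mat 1 :: real^'n^'n"] colsum_mat1 by metis

lemma nonneg_mat1: "nonneg_mat (mat 1 :: real^'n::finite^'n)"
  unfolding nonneg_mat_def mat_def by simp

lemma wp_nonneg: "\<forall>i. allowable (B i) \<Longrightarrow> nonneg_mat (word_prod B \<theta> n)"
  by (induction n) (auto simp: nonneg_mat1 allowable_def intro!: nonneg_mult)

lemma wp_min:
  assumes "\<forall>i. allowable (B i)"
  shows "(\<Prod>i<n. min_col_sum (B (\<theta> i))) \<le> min_col_sum (word_prod B \<theta> n)"
proof (induction n)
  case 0 then show ?case by (simp add: min_mat1)
next
  case (Suc n)
  have nnB: "nonneg_mat (B (\<theta> n))" using assms unfolding allowable_def by simp
  have "(\<Prod>i<Suc n. min_col_sum (B (\<theta> i))) = (\<Prod>i<n. min_col_sum (B (\<theta> i))) * min_col_sum (B (\<theta> n))"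
    by simp
  also have "\<dots> \<le> min_col_sum (word_prod B \<theta> n) * min_col_sum (B (\<theta> n))"
    using Suc min_nonneg[OF nnB] by (intro mult_right_mono) auto
  also have "\<dots> \<le> min_col_sum (word_prod B \<theta> (Suc n))"
    using min_mult[OF wp_nonneg[OF assms] nnB] by simp
  finally show ?case .
qed

lemma wp_max:
  assumes "\<forall>i. allowable (B i)"
  shows "max_col_sum (word_prod B \<theta> n) \<le> (\<Prod>i<n. max_col_sum (B (\<theta> i)))"
proof (induction n)
  case 0 then show ?case by (simp add: max_mat1)
next
  case (Suc n)
  have nnB: "nonneg_mat (B (\<theta> n))" using assms unfolding allowable_def by simp
  have "max_col_sum (word_prod B \<theta> (Suc n)) \<le> max_col_sum (word_prod B \<theta> n) * max_col_sum (B (\<theta> n))"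
    using max_mult[OF wp_nonneg[OF assms] nnB] by simp
  also have "\<dots> \<le> (\<Prod>i<n. max_col_sum (B (\<theta> i))) * max_col_sum (B (\<theta> n))"
    using Suc max_nonneg[OF nnB] by (intro mult_right_mono) auto
  finally show ?case by simp
qed

lemma wp_min_pos:
  assumes "\<forall>i. allowable (B i)" shows "0 < min_col_sum (word_prod B \<theta> n)"
proof -
  have "0 < (\<Prod>i<n. min_col_sum (B (\<theta> i)))"
    using assms allow_min_pos by (intro prod_pos) auto
  then show ?thesis using wp_min[OF assms, where n=n and \<theta>=\<theta>] by linarith
qed

lemma wp_add: "word_prod B \<theta> (n + m) = word_prod B \<theta> n ** word_prod B (\<lambda>k. \<theta> (k + n)) m"
  by (induction m) (simp_all add: matrix_mul_assoc add.commute)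

lemma wp_cong: "(\<And>k. k < n \<Longrightarrow> \<theta> k = \<theta>' k) \<Longrightarrow> word_prod B \<theta> n = word_prod B \<theta>' n"
  by (induction n) auto

lemma shift_pow: "(shift ^^ n) \<theta> = (\<lambda>k. \<theta> (k + n))"
  by (induction n arbitrary: \<theta>) (simp_all add: shift_def funpow_swap1)


lemma space_seq: "space (seq_space :: (nat \<Rightarrow> 'i) measure) = UNIV"
  by (simp add: seq_space_def space_PiM)

theorem lemma3p4:
  fixes \<nu> :: "(nat \<Rightarrow> 'i::countable) measure"
    and B :: "'i \<Rightarrow> real^'n::finite^'n"
  assumes "CARD('n) \<ge> 2"
    and "sets \<nu> = sets seq_space"
    and "prob_space \<nu>"
    and "shift_invariant \<nu>"
    and "shift_ergodic \<nu>"
    and "\<forall>i. allowable (B i)"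
    and "good_family B \<nu>"
  shows "\<exists>lam lam_star::real.
           (AE \<theta> in \<nu>. (\<lambda>n. ln (entry_sum (word_prod B \<theta> n)) / real n) \<longlonglongrightarrow> lam)
         \<and> (AE \<theta> in \<nu>. (\<lambda>n. ln (min_col_sum (word_prod B \<theta> n)) / real n) \<longlonglongrightarrow> lam_star)
         \<and> lam = lam_star"
proof -
  have al: "\<forall>i. allowable (B i)" by (rule assms(6))
  have sp: "space \<nu> = UNIV" using sets_eq_imp_space_eq[OF assms(2)] space_seq by simp
  have shm: "shift \<in> \<nu> \<rightarrow>\<^sub>M \<nu>" using assms(4) unfolding shift_invariant_def by simp
  interpret E: erg \<nu> shift
  proof (rule erg.intro)
    show "prob_space \<nu>" by (rule assms(3))
    show "erg_axioms \<nu> shift"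
    proof (rule erg_axioms.intro)
      show "shift \<in> \<nu> \<rightarrow>\<^sub>M \<nu>" by (rule shm)
      show "space \<nu> = UNIV" by (rule sp)
      fix A assume A: "A \<in> sets \<nu>"
      show "emeasure \<nu> (shift -` A) = emeasure \<nu> A"
        using assms(4) A sp unfolding shift_invariant_def by auto
      show "shift -` A = A \<Longrightarrow> measure \<nu> A = 0 \<or> measure \<nu> A = 1"
        using assms(5) A sp unfolding shift_ergodic_def by auto
    qed
  qed
  have coord[measurable]: "(\<lambda>\<theta>. \<theta> k) \<in> \<nu> \<rightarrow>\<^sub>M count_space UNIV" for k
  proof -
    have eq: "(\<nu> \<rightarrow>\<^sub>M (count_space UNIV :: 'i measure)) = ((seq_space :: (nat \<Rightarrow> 'i) measure) \<rightarrow>\<^sub>M count_space UNIV)"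
      by (rule measurable_cong_sets[OF assms(2)]) simp
    show ?thesis unfolding eq seq_space_def by (rule measurable_component_singleton) simp
  qed
  have Bfun: "(\<lambda>\<theta>. f (\<theta> k)) \<in> borel_measurable \<nu>" for f :: "'i \<Rightarrow> real" and k
    by (rule measurable_compose[OF coord]) simp
  have ent: "(\<lambda>\<theta>. word_prod B \<theta> n $ i $ j) \<in> borel_measurable \<nu>" for n i j
  proof (induction n arbitrary: i j)
    case 0 then show ?case by simp
  next
    case (Suc n)
    have "(\<lambda>\<theta>. \<Sum>k\<in>UNIV. word_prod B \<theta> n $ i $ k * B (\<theta> n) $ k $ j) \<in> borel_measurable \<nu>"
      by (intro borel_measurable_sum borel_measurable_times Suc Bfun[of "\<lambda>a. B a $ _ $ j"])
    then show ?case by (simp add: matrix_matrix_mult_def)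
  qed
  have colm: "(\<lambda>\<theta>. \<Sum>i\<in>UNIV. word_prod B \<theta> n $ i $ j) \<in> borel_measurable \<nu>" for n j
    by (intro borel_measurable_sum ent)
  have esm[measurable]: "(\<lambda>\<theta>. entry_sum (word_prod B \<theta> n)) \<in> borel_measurable \<nu>" for n
    unfolding entry_sum_def by (intro borel_measurable_sum ent)
  have minm[measurable]: "(\<lambda>\<theta>. min_col_sum (word_prod B \<theta> n)) \<in> borel_measurable \<nu>" for n
    unfolding min_col_sum_def by (intro borel_measurable_Min colm) auto
  define lmax where "lmax \<theta> = ln (max_col_sum (B (\<theta> (0::nat))))" for \<theta> :: "nat \<Rightarrow> 'i"
  define lmin where "lmin \<theta> = ln (min_col_sum (B (\<theta> (0::nat))))" for \<theta> :: "nat \<Rightarrow> 'i"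
  have lmaxm: "lmax \<in> borel_measurable \<nu>" unfolding lmax_def by (rule Bfun)
  have lminm: "lmin \<in> borel_measurable \<nu>" unfolding lmin_def by (rule Bfun)
  have gf: "(\<integral>\<^sup>+ \<theta>. ennreal \<bar>lmax \<theta>\<bar> \<partial>\<nu>) + (\<integral>\<^sup>+ \<theta>. ennreal \<bar>lmin \<theta>\<bar> \<partial>\<nu>) < \<infinity>"
    using assms(7) unfolding good_family_def lmax_def lmin_def by simp
  have lmax_int: "integrable \<nu> lmax"
    by (rule integrableI_bounded[OF lmaxm]) (use gf in \<open>auto simp: top_unique\<close>)
  have lmin_int: "integrable \<nu> lmin"
    by (rule integrableI_bounded[OF lminm]) (use gf in \<open>auto simp: top_unique\<close>)
  have minB: "0 < min_col_sum (B a)" for a using al allow_min_pos by blast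
  have maxB: "0 < max_col_sum (B a)" for a using minB[of a] min_le_max[of "B a"] by linarith
  have nnB: "nonneg_mat (B a)" for a using al unfolding allowable_def by simp
  have Wmin: "0 < min_col_sum (word_prod B \<theta> n)" for \<theta> n by (rule wp_min_pos[OF al])
  have Wnn: "nonneg_mat (word_prod B \<theta> n)" for \<theta> n by (rule wp_nonneg[OF al])
  have Went: "0 < entry_sum (word_prod B \<theta> n)" for \<theta> n
    using Wmin[of \<theta> n] min_le_entry[OF Wnn[of \<theta> n]] by linarith
  have Wsplit: "word_prod B \<theta> (n + m) = word_prod B \<theta> n ** word_prod B ((shift ^^ n) \<theta>) m" for \<theta> n m
    by (simp add: wp_add shift_pow)
  have sh0: "((shift ^^ i) \<theta>) 0 = \<theta> i" for i \<theta> by (simp add: shift_pow)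

  define g where "g n \<theta> = (if n = 0 then 0 else ln (entry_sum (word_prod B \<theta> n)))" for n \<theta>
  define u where "u \<theta> = ln (real CARD('n)) + lmax \<theta>" for \<theta>
  interpret K1: kingman \<nu> shift g u lmin
  proof (unfold_locales)
    show "g n \<in> borel_measurable \<nu>" for n unfolding g_def by (cases "n = 0") simp_all
    show "g 0 x = 0" for x by (simp add: g_def)
    show "g (n + m) x \<le> g n x + g m ((shift ^^ n) x)" for n m x
    proof (cases "n = 0 \<or> m = 0")
      case True then show ?thesis by (auto simp: g_def)
    next
      case False
      have "entry_sum (word_prod B x (n + m)) \<le> entry_sum (word_prod B x n) * entry_sum (word_prod B ((shift ^^ n) x) m)"
        unfolding Wsplit by (rule entry_mult[OF Wnn Wnn])
      then have "ln (entry_sum (word_prod B x (n + m))) \<le> ln (entry_sum (word_prod B x n) * entry_sum (word_prod B ((shift ^^ n) x) m))"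
        using Went by (intro ln_mono) auto
      also have "\<dots> = ln (entry_sum (word_prod B x n)) + ln (entry_sum (word_prod B ((shift ^^ n) x) m))"
        using Went by (intro ln_mult_pos) auto
      finally show ?thesis using False by (simp add: g_def)
    qed
    show "integrable \<nu> u" unfolding u_def by (intro Bochner_Integration.integrable_add E.integrable_const lmax_int)
    show "g 1 x \<le> u x" for x
    proof -
      have "entry_sum (B (x 0)) \<le> real CARD('n) * max_col_sum (B (x 0))" by (rule entry_le_max)
      then have "ln (entry_sum (B (x 0))) \<le> ln (real CARD('n) * max_col_sum (B (x 0)))"
        using Went[of x 1] by (intro ln_mono) auto
      also have "\<dots> = ln (real CARD('n)) + lmax x"
        unfolding lmax_def using maxB by (intro ln_mult_pos) auto
      finally show ?thesis by (simp add: g_def u_def)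
    qed
    show "integrable \<nu> lmin" by (rule lmin_int)
    show "E.birk n lmin x \<le> g n x" for n x
    proof (cases "n = 0")
      case True then show ?thesis by (simp add: g_def)
    next
      case False
      have "E.birk n lmin x = (\<Sum>i<n. ln (min_col_sum (B (x i))))"
        unfolding E.birk_def lmin_def sh0 by simp
      also have "\<dots> = ln (\<Prod>i<n. min_col_sum (B (x i)))"
        using minB by (intro ln_prod[symmetric]) (auto, metis less_irrefl)
      also have "\<dots> \<le> ln (min_col_sum (word_prod B x n))"
        using minB by (intro ln_mono wp_min[OF al] prod_pos) auto
      also have "\<dots> \<le> ln (entry_sum (word_prod B x n))"
        using Wmin by (intro ln_mono min_le_entry Wnn)
      finally show ?thesis using False by (simp add: g_def)
    qed
  qed
  define h where "h n \<theta> = (if n = 0 then 0 else - ln (min_col_sum (word_prod B \<theta> n)))" for n \<theta>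
  interpret K2: kingman \<nu> shift h "\<lambda>\<theta>. - lmin \<theta>" "\<lambda>\<theta>. - lmax \<theta>"
  proof (unfold_locales)
    show "h n \<in> borel_measurable \<nu>" for n unfolding h_def by (cases "n = 0") simp_all
    show "h 0 x = 0" for x by (simp add: h_def)
    show "h (n + m) x \<le> h n x + h m ((shift ^^ n) x)" for n m x
    proof (cases "n = 0 \<or> m = 0")
      case True then show ?thesis by (auto simp: h_def)
    next
      case False
      have "min_col_sum (word_prod B x n) * min_col_sum (word_prod B ((shift ^^ n) x) m) \<le> min_col_sum (word_prod B x (n + m))"
        unfolding Wsplit by (rule min_mult[OF Wnn Wnn])
      then have "ln (min_col_sum (word_prod B x n) * min_col_sum (word_prod B ((shift ^^ n) x) m)) \<le> ln (min_col_sum (word_prod B x (n + m)))"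
        using Wmin by (intro ln_mono) (auto intro: mult_pos_pos)
      moreover have "ln (min_col_sum (word_prod B x n) * min_col_sum (word_prod B ((shift ^^ n) x) m)) = ln (min_col_sum (word_prod B x n)) + ln (min_col_sum (word_prod B ((shift ^^ n) x) m))"
        using Wmin by (intro ln_mult_pos) auto
      ultimately show ?thesis using False by (simp add: h_def)
    qed
    show "integrable \<nu> (\<lambda>\<theta>. - lmin \<theta>)" using lmin_int by simp
    show "h 1 x \<le> - lmin x" for x by (simp add: h_def lmin_def)
    show "integrable \<nu> (\<lambda>\<theta>. - lmax \<theta>)" using lmax_int by simp
    show "E.birk n (\<lambda>\<theta>. - lmax \<theta>) x \<le> h n x" for n x
    proof (cases "n = 0")
      case True then show ?thesis by (simp add: h_def)
    next
      case False
      have "E.birk n lmax x = (\<Sum>i<n. ln (max_col_sum (B (x i))))"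
        unfolding E.birk_def lmax_def sh0 by simp
      also have "\<dots> = ln (\<Prod>i<n. max_col_sum (B (x i)))"
        using maxB by (intro ln_prod[symmetric]) (auto, metis less_irrefl)
      also have "\<dots> \<ge> ln (max_col_sum (word_prod B x n))"
        using Wmin min_le_max[of "word_prod B x n"] by (intro ln_mono wp_max[OF al]) (auto intro: less_le_trans)
      also have "ln (max_col_sum (word_prod B x n)) \<ge> ln (min_col_sum (word_prod B x n))"
        using Wmin by (intro ln_mono min_le_max)
      finally have "ln (min_col_sum (word_prod B x n)) \<le> E.birk n lmax x" .
      then show ?thesis using False by (simp add: h_def E.birk_uminus)
    qed
  qed
  obtain c1 where c1: "AE \<theta> in \<nu>. (\<lambda>n. g n \<theta> / n) \<longlonglongrightarrow> c1" using K1.kingman_conv by blast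
  obtain c2 where c2: "AE \<theta> in \<nu>. (\<lambda>n. h n \<theta> / n) \<longlonglongrightarrow> c2" using K2.kingman_conv by blast
  have geq: "(\<lambda>n. g n \<theta> / n) = (\<lambda>n. ln (entry_sum (word_prod B \<theta> n)) / real n)" for \<theta>
    by (rule ext) (simp add: g_def)
  have heq: "(\<lambda>n. h n \<theta> / n) = (\<lambda>n. - (ln (min_col_sum (word_prod B \<theta> n)) / real n))" for \<theta>
    by (rule ext) (simp add: h_def)
  have C1: "AE \<theta> in \<nu>. (\<lambda>n. ln (entry_sum (word_prod B \<theta> n)) / real n) \<longlonglongrightarrow> c1"
    using c1 by (simp add: geq)
  have C2: "AE \<theta> in \<nu>. (\<lambda>n. ln (min_col_sum (word_prod B \<theta> n)) / real n) \<longlonglongrightarrow> - c2"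
    using c2
  proof eventually_elim
    case (elim \<theta>)
    then have "(\<lambda>n. - (- (ln (min_col_sum (word_prod B \<theta> n)) / real n))) \<longlonglongrightarrow> - c2"
      unfolding heq by (rule tendsto_minus)
    then show ?case by simp
  qed
  obtain n0 \<theta>w where pw: "emeasure \<nu> {\<theta> \<in> space \<nu>. \<forall>k<n0. \<theta> k = \<theta>w k} > 0"
      "\<forall>i j. word_prod B \<theta>w n0 $ i $ j > 0"
    using assms(7) unfolding good_family_def by blast
  define C where "C = {\<theta> \<in> space \<nu>. \<forall>k<n0. \<theta> k = \<theta>w k}"
  have Cm: "C \<in> sets \<nu>" unfolding C_def by measurable
  have Cpos: "0 < measure \<nu> C" using pw(1) unfolding C_def[symmetric] by (simp add: E.emeasure_eq_measure)
  obtain p where p: "0 < p" "\<forall>i j. p \<le> word_prod B \<theta>w n0 $ i $ j" using pos_min_ex[OF pw(2)] by blast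
  have key: "ln p + ln (entry_sum (word_prod B \<theta> i)) \<le> ln (min_col_sum (word_prod B \<theta> (i + n0)))"
    if "(shift ^^ i) \<theta> \<in> C" for \<theta> i
  proof -
    have "word_prod B ((shift ^^ i) \<theta>) n0 = word_prod B \<theta>w n0"
      using that unfolding C_def by (intro wp_cong) auto
    then have "word_prod B \<theta> (i + n0) = word_prod B \<theta> i ** word_prod B \<theta>w n0"
      using Wsplit by simp
    then have "p * entry_sum (word_prod B \<theta> i) \<le> min_col_sum (word_prod B \<theta> (i + n0))"
      using pos_word[OF Wnn p(2)] by simp
    then have "ln (p * entry_sum (word_prod B \<theta> i)) \<le> ln (min_col_sum (word_prod B \<theta> (i + n0)))"
      using p Went by (intro ln_mono) auto
    moreover have "ln (p * entry_sum (word_prod B \<theta> i)) = ln p + ln (entry_sum (word_prod B \<theta> i))"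
      using p Went by (intro ln_mult_pos) auto
    ultimately show ?thesis by simp
  qed
  define P where "P \<theta> \<longleftrightarrow> (\<lambda>n. ln (entry_sum (word_prod B \<theta> n)) / real n) \<longlonglongrightarrow> c1
      \<and> (\<lambda>n. ln (min_col_sum (word_prod B \<theta> n)) / real n) \<longlonglongrightarrow> - c2
      \<and> (\<forall>N. \<exists>i\<ge>N. (shift ^^ i) \<theta> \<in> C)" for \<theta>
  have aeall: "AE \<theta> in \<nu>. P \<theta>"
    using C1 C2 E.recurrence[OF Cm Cpos] unfolding P_def by eventually_elim auto
  have "\<exists>\<theta>. P \<theta>"
  proof (rule ccontr)
    assume nex: "\<not> (\<exists>\<theta>. P \<theta>)"
    from aeall have "AE \<theta> in \<nu>. False" by (rule eventually_mono) (use nex in blast)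
    then show False using E.AE_False by simp
  qed
  then obtain \<theta> where th: "(\<lambda>n. ln (entry_sum (word_prod B \<theta> n)) / real n) \<longlonglongrightarrow> c1"
      "(\<lambda>n. ln (min_col_sum (word_prod B \<theta> n)) / real n) \<longlonglongrightarrow> - c2"
      "\<forall>N. \<exists>i\<ge>N. (shift ^^ i) \<theta> \<in> C"
    unfolding P_def by blast
  have le1: "- c2 \<le> c1"
  proof (rule LIMSEQ_le[OF th(2) th(1)])
    show "\<exists>N. \<forall>n\<ge>N. ln (min_col_sum (word_prod B \<theta> n)) / real n \<le> ln (entry_sum (word_prod B \<theta> n)) / real n"
      using Wmin by (intro exI[of _ 0] allI impI divide_right_mono ln_mono min_le_entry Wnn) auto
  qed
  have le2: "c1 \<le> - c2"
  proof (rule ccontr)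
    assume "\<not> c1 \<le> - c2"
    then have gap: "- c2 < c1" by simp
    define e where "e = (c1 + c2) / 3"
    have e: "0 < e" using gap by (simp add: e_def)
    have "eventually (\<lambda>n. c1 - e < ln (entry_sum (word_prod B \<theta> n)) / real n) sequentially"
      using order_tendstoD(1)[OF th(1)] e by simp
    then obtain N1 where N1: "\<And>n. n \<ge> N1 \<Longrightarrow> c1 - e < ln (entry_sum (word_prod B \<theta> n)) / real n"
      by (auto simp: eventually_sequentially)
    have "eventually (\<lambda>n. ln (min_col_sum (word_prod B \<theta> n)) / real n < - c2 + e) sequentially"
      using order_tendstoD(2)[OF th(2)] e by simp
    then obtain N2 where N2: "\<And>n. n \<ge> N2 \<Longrightarrow> ln (min_col_sum (word_prod B \<theta> n)) / real n < - c2 + e"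
      by (auto simp: eventually_sequentially)
    obtain N3 :: nat where N3: "(n0 * (- c2 + e) - ln p) / e < N3" using reals_Archimedean2 by blast
    obtain i where i: "i \<ge> max (max N1 N2) (max N3 1)" "(shift ^^ i) \<theta> \<in> C" using th(3) by blast
    have ipos: "0 < real i" using i by simp
    have a: "i * (c1 - e) < ln (entry_sum (word_prod B \<theta> i))"
      using N1[of i] i ipos by (simp add: field_simps)
    have b: "ln (min_col_sum (word_prod B \<theta> (i + n0))) < (i + n0) * (- c2 + e)"
      using N2[of "i + n0"] i ipos by (simp add: field_simps)
    have c: "ln p + ln (entry_sum (word_prod B \<theta> i)) \<le> ln (min_col_sum (word_prod B \<theta> (i + n0)))"
      by (rule key[OF i(2)])
    have "ln p + i * (c1 - e) < (i + n0) * (- c2 + e)" using a b c by linarith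
    then have "i * (c1 + c2 - 2 * e) < n0 * (- c2 + e) - ln p" by (simp add: algebra_simps)
    moreover have "c1 + c2 - 2 * e = e" by (simp add: e_def field_simps)
    ultimately have "i * e < n0 * (- c2 + e) - ln p" by simp
    moreover have "n0 * (- c2 + e) - ln p < N3 * e" using N3 e by (simp add: field_simps)
    moreover have "N3 * e \<le> i * e" using i e by (intro mult_right_mono) auto
    ultimately show False by linarith
  qed
  show ?thesis
    by (intro exI[of _ c1] conjI C1) (use C2 le1 le2 in auto)
qed

end
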